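(* For every $n\ge 0$, the number $b(n)$ of non-squashing partitions of $n$ into distinct parts equals the number of partitions of $n$ into powers of $2$ such that either all parts are equal to $1$, or the largest part is $2^i>1$ and there is at least one part equal to $2^{i-1}$.
   Context: A partition $n=p_1+\cdots+p_k$ with $1\le p_1\le\cdots\le p_k$ is non-squashing if $p_1+\cdots+p_j\le p_{j+1}$ for all $1\le j\le k-1$. The empty partition of $0$ counts (vacuously) in both families. *)

theory Defs
  imports Main
begin

definition is_partition :: "nat list \<Rightarrow> nat \<Rightarrow> bool" where
  "is_partition p n \<longleftrightarrow> sorted p \<and> (\<forall>x\<in>set p. 0 < x) \<and> sum_list p = n"

text \<open>Non-squashing: p_1 + ... + p_j \<le> p_(j+1) for 1 \<le> j \<le> k-1 (0-based indexing of p).\<close>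
definition non_squashing :: "nat list \<Rightarrow> bool" where
  "non_squashing p \<longleftrightarrow> (\<forall>j. 1 \<le> j \<and> j < length p \<longrightarrow> sum_list (take j p) \<le> p ! j)"

definition b :: "nat \<Rightarrow> nat" where
  "b n = card {p. is_partition p n \<and> distinct p \<and> non_squashing p}"

definition pow2_special_count :: "nat \<Rightarrow> nat" where
  "pow2_special_count n = card {p. is_partition p n \<and> (\<forall>x\<in>set p. \<exists>k. x = 2 ^ k) \<and>
      ((\<forall>x\<in>set p. x = 1) \<or>
       (\<exists>i. 1 \<le> i \<and> Max (set p) = 2 ^ i \<and> 2 ^ (i - 1) \<in> set p))}"

end

theory Submission
  imports Defs
begin

lemma len_le_sum: "(\<forall>x\<in>set p. 0 < (x::nat)) \<Longrightarrow> length p \<le> sum_list p"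
  by (induction p) auto

lemma finite_parts: "finite {p. is_partition p n}"
proof (rule finite_subset)
  show "{p. is_partition p n} \<subseteq> {xs. set xs \<subseteq> {..n} \<and> length xs \<le> n}"
    using len_le_sum member_le_sum_list unfolding is_partition_def by fastforce
  show "finite {xs. set xs \<subseteq> {..n::nat} \<and> length xs \<le> n}"
    by (rule finite_lists_length_le) simp
qed

lemma card_decomp:
  assumes "finite K" "\<And>k. k\<in>K \<Longrightarrow> finite (F k)" "\<And>k. k\<in>K \<Longrightarrow> inj_on (g k) (F k)"
    "\<And>k1 k2. k1\<in>K \<Longrightarrow> k2\<in>K \<Longrightarrow> k1\<noteq>k2 \<Longrightarrow> g k1 ` F k1 \<inter> g k2 ` F k2 = {}"
    "A \<union> E = (\<Union>k\<in>K. g k ` F k)" "A \<inter> E = {}" "finite E"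
  shows "card A + card E = (\<Sum>k\<in>K. card (F k))"
proof -
  have fU: "finite (\<Union>k\<in>K. g k ` F k)" using assms(1,2) by blast
  hence fA: "finite A" using assms(5) by (metis finite_Un)
  have "card A + card E = card (A \<union> E)" using card_Un_disjoint[OF fA assms(7,6)] by simp
  also have "\<dots> = (\<Sum>k\<in>K. card (g k ` F k))"
    unfolding assms(5) by (rule card_UN_disjoint) (use assms in auto)
  also have "\<dots> = (\<Sum>k\<in>K. card (F k))"
    by (rule sum.cong) (use assms(3) card_image in auto)
  finally show ?thesis .
qed

lemma ns_snoc: "non_squashing (q @ [m]) \<longleftrightarrow> non_squashing q \<and> (q \<noteq> [] \<longrightarrow> sum_list q \<le> m)"
proof
  assume H: "non_squashing (q @ [m])"
  have "non_squashing q" unfolding non_squashing_def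
  proof (intro allI impI)
    fix j assume j: "1 \<le> j \<and> j < length q"
    with H have "sum_list (take j (q@[m])) \<le> (q@[m]) ! j" unfolding non_squashing_def by auto
    with j show "sum_list (take j q) \<le> q ! j" by (simp add: nth_append)
  qed
  moreover have "q \<noteq> [] \<longrightarrow> sum_list q \<le> m"
  proof
    assume "q \<noteq> []"
    with H have "sum_list (take (length q) (q@[m])) \<le> (q@[m]) ! length q" unfolding non_squashing_def
      by (metis One_nat_def Suc_leI length_append_singleton length_greater_0_conv lessI)
    thus "sum_list q \<le> m" by simp
  qed
  ultimately show "non_squashing q \<and> (q \<noteq> [] \<longrightarrow> sum_list q \<le> m)" by blast
next
  assume H: "non_squashing q \<and> (q \<noteq> [] \<longrightarrow> sum_list q \<le> m)"
  show "non_squashing (q @ [m])" unfolding non_squashing_def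
  proof (intro allI impI)
    fix j assume j: "1 \<le> j \<and> j < length (q @ [m])"
    show "sum_list (take j (q @ [m])) \<le> (q @ [m]) ! j"
    proof (cases "j < length q")
      case True
      with H j show ?thesis unfolding non_squashing_def by (simp add: nth_append)
    next
      case False
      with j have "j = length q" by simp
      with H j show ?thesis by auto
    qed
  qed
qed

lemma sum_single: "x \<in> set q \<Longrightarrow> \<forall>y\<in>set q. 0 < (y::nat) \<Longrightarrow> sum_list q = x \<Longrightarrow> q = [x]"
proof (induction q)
  case Nil then show ?case by simp
next
  case (Cons a q)
  show ?case
  proof (cases "a = x")
    case True
    with Cons.prems have "sum_list q = 0" by simp
    with Cons.prems have "q = []" by (cases q) auto
    with True show ?thesis by simp
  next
    case False
    with Cons.prems have "x \<in> set q" by simp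
    hence "x \<le> sum_list q" using member_le_sum_list[of x q] by simp
    with Cons.prems show ?thesis by simp
  qed
qed

definition BS :: "nat \<Rightarrow> nat list set" where
  "BS n = {p. is_partition p n \<and> distinct p \<and> non_squashing p}"

lemma finite_BS: "finite (BS n)"
  unfolding BS_def by (rule finite_subset[OF _ finite_parts]) auto

lemma b_rec:
  assumes n: "n \<ge> 1"
  shows "b n + (if even n then 1 else 0) = (\<Sum>k\<le>n div 2. b k)"
proof -
  define E where "E = (if even n then {[n div 2, n div 2]} else {})"
  define g where "g = (\<lambda>k q. q @ [n - k :: nat])"
  have "card (BS n) + card E = (\<Sum>k\<in>{..n div 2}. card (BS k))"
  proof (rule card_decomp[where g = g])
    show "\<And>k. k \<in> {..n div 2} \<Longrightarrow> inj_on (g k) (BS k)" unfolding g_def inj_on_def by simp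
    show "g k1 ` BS k1 \<inter> g k2 ` BS k2 = {}" if "k1 \<in> {..n div 2}" "k2 \<in> {..n div 2}" "k1 \<noteq> k2" for k1 k2
    proof -
      have "n - k1 \<noteq> n - k2" using that by auto
      thus ?thesis unfolding g_def by blast
    qed
    have "[n div 2, n div 2] \<notin> BS n" unfolding BS_def by simp
    thus "BS n \<inter> E = {}" unfolding E_def by simp
    show "finite E" unfolding E_def by simp
    show "BS n \<union> E = (\<Union>k\<in>{..n div 2}. g k ` BS k)"
    proof (intro equalityI subsetI)
      fix p assume "p \<in> BS n \<union> E"
      then consider "p \<in> BS n" | "even n" "p = [n div 2, n div 2]" unfolding E_def by (auto split: if_splits)
      then show "p \<in> (\<Union>k\<in>{..n div 2}. g k ` BS k)"
      proof cases
        case 1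
        hence P: "sorted p" "\<forall>x\<in>set p. 0 < x" "sum_list p = n" "distinct p" "non_squashing p"
          unfolding BS_def is_partition_def by auto
        with n have "p \<noteq> []" by auto
        then obtain q m where pq: "p = q @ [m]" by (metis rev_exhaust)
        define k where "k = sum_list q"
        have km: "m = n - k" using P pq k_def by simp
        have "k \<le> n div 2"
        proof (cases "q = []")
          case True then show ?thesis using k_def by simp
        next
          case False
          have "non_squashing (q @ [m])" using P(5) pq by simp
          hence "sum_list q \<le> m" using False ns_snoc by blast
          hence "k \<le> m" using k_def by simp
          with P pq k_def show ?thesis by simp
        qed
        moreover have "q \<in> BS k"
        proof -
          have "sorted q" using P(1) pq by (simp add: sorted_append)
          moreover have "\<forall>x\<in>set q. 0 < x" "distinct q" using P(2,4) pq by auto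
          moreover have "non_squashing q" using P(5) pq ns_snoc by blast
          ultimately show ?thesis using k_def unfolding BS_def is_partition_def by blast
        qed
        ultimately show ?thesis unfolding g_def using pq km by blast
      next
        case 2
        have "[n div 2] \<in> BS (n div 2)" using 2 n unfolding BS_def is_partition_def non_squashing_def
          by auto
        moreover have "p = g (n div 2) [n div 2]" using 2 unfolding g_def by auto
        ultimately show ?thesis by blast
      qed
    next
      fix p assume "p \<in> (\<Union>k\<in>{..n div 2}. g k ` BS k)"
      then obtain k q where k: "k \<le> n div 2" and q: "q \<in> BS k" and pq: "p = q @ [n - k]"
        unfolding g_def by auto
      from q have Q: "sorted q" "\<forall>x\<in>set q. 0 < x" "sum_list q = k" "distinct q" "non_squashing q"
        unfolding BS_def is_partition_def by auto
      have le: "\<forall>x\<in>set q. x \<le> n - k" using Q k member_le_sum_list by fastforce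
      show "p \<in> BS n \<union> E"
      proof (cases "n - k \<in> set q")
        case True
        have "n - k \<le> k" using member_le_sum_list[OF True] Q(3) by simp
        moreover have "k \<le> n - k" using k by simp
        ultimately have nk: "n - k = k" by simp
        hence "q = [k]" using sum_single[OF True] Q by simp
        have n2: "n = 2 * k" using nk k by linarith
        with \<open>q = [k]\<close> pq nk have "even n" "p = [n div 2, n div 2]" by auto
        thus ?thesis unfolding E_def by simp
      next
        case False
        have "n - k > 0" using n k by simp
        have "sorted p" using Q(1) le pq by (simp add: sorted_append)
        moreover have "\<forall>x\<in>set p. 0 < x" using Q(2) \<open>n - k > 0\<close> pq by auto
        moreover have "distinct p" using Q(4) False pq by simp
        moreover have "sum_list p = n" using Q(3) k pq by simp
        moreover have "k \<le> n - k" using k by simp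
        moreover have "non_squashing p" using Q(3,5) \<open>k \<le> n - k\<close> pq ns_snoc by simp
        ultimately have "p \<in> BS n" unfolding BS_def is_partition_def by blast
        thus ?thesis by simp
      qed
    qed
  qed (auto simp: finite_BS)
  thus ?thesis unfolding b_def BS_def E_def by (simp split: if_splits)
qed

definition pw :: "nat list \<Rightarrow> bool" where
  "pw p \<longleftrightarrow> (\<forall>x\<in>set p. \<exists>k. x = 2 ^ k)"
definition sp :: "nat set \<Rightarrow> bool" where
  "sp S \<longleftrightarrow> (\<forall>x\<in>S. x = 1) \<or> (\<exists>i. 1 \<le> i \<and> 2^i \<in> S \<and> 2^(i-1) \<in> S \<and> (\<forall>x\<in>S. x \<le> 2^i))"
definition CS :: "nat \<Rightarrow> nat list set" where
  "CS n = {p. is_partition p n \<and> pw p \<and> sp (set p)}"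

lemma sp_iff: "finite S \<Longrightarrow> (\<exists>i. 1 \<le> i \<and> Max S = 2 ^ i \<and> 2 ^ (i - 1) \<in> S) \<longleftrightarrow>
   (\<exists>i. 1 \<le> i \<and> 2^i \<in> S \<and> 2^(i-1) \<in> S \<and> (\<forall>x\<in>S. x \<le> (2::nat)^i))"
  by (cases "S = {}") (auto simp: Max_eq_iff)

lemma CS_eq: "pow2_special_count n = card (CS n)"
  unfolding pow2_special_count_def CS_def pw_def sp_def using sp_iff[of "set _"] by simp

lemma finite_CS: "finite (CS n)"
  unfolding CS_def by (rule finite_subset[OF _ finite_parts]) auto

lemma split_ones: "sorted p \<Longrightarrow> \<forall>x\<in>set p. 0 < (x::nat) \<Longrightarrow>
   filter (\<lambda>x. x = 1) p @ filter (\<lambda>x. x \<noteq> 1) p = p"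
proof (induction p)
  case Nil then show ?case by simp
next
  case (Cons a p)
  show ?case
  proof (cases "a = 1")
    case True with Cons show ?thesis by simp
  next
    case False
    with Cons.prems have "\<forall>x\<in>set p. x \<noteq> 1" by fastforce
    hence "filter (\<lambda>x. x = 1) p = []" "filter (\<lambda>x. x \<noteq> 1) p = p" by (auto simp: filter_empty_conv)
    with False show ?thesis by simp
  qed
qed

lemma pdiv: "1 \<le> j \<Longrightarrow> (2::nat)^j div 2 = 2^(j-1)"
  by (cases j) auto

lemma pmul: "1 \<le> j \<Longrightarrow> 2 * (2::nat)^(j-1) = 2^j"
  by (cases j) auto

lemma sum_ones: "\<forall>x\<in>set r. x = (1::nat) \<Longrightarrow> sum_list r = length r"
  by (induction r) auto

lemma filt_comm: "filter (\<lambda>x. x = (a::nat)) p = filter (\<lambda>y. a = y) p"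
  by (induction p) auto

lemma not_sp2: "\<not> sp {2}"
proof
  assume "sp {2}"
  then obtain i where i: "1 \<le> i" "(2::nat)^i = 2" "(2::nat)^(i-1) = 2" unfolding sp_def by auto
  have "i = 1" using i(2) power_inject_exp[of "2::nat" i 1] by simp
  with i(3) show False by simp
qed

lemma c_rec:
  assumes n: "n \<ge> 1"
  shows "pow2_special_count n + (if even n then 1 else 0) = (\<Sum>k\<le>n div 2. pow2_special_count k)"
proof -
  define E where "E = (if even n then {replicate (n div 2) (2::nat)} else {})"
  define g where "g = (\<lambda>k r. replicate (n - 2 * k) (1::nat) @ map ((*) 2) r)"
  have cnt: "length (filter (\<lambda>x. x = 1) (g k r)) = n - 2 * k" for k r
    unfolding g_def by (simp add: filter_empty_conv)
  have "card (CS n) + card E = (\<Sum>k\<in>{..n div 2}. card (CS k))"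
  proof (rule card_decomp[where g = g])
    show "\<And>k. k \<in> {..n div 2} \<Longrightarrow> inj_on (g k) (CS k)" unfolding g_def inj_on_def by (simp add: inj_map_eq_map inj_def)
    show "g k1 ` CS k1 \<inter> g k2 ` CS k2 = {}" if "k1 \<in> {..n div 2}" "k2 \<in> {..n div 2}" "k1 \<noteq> k2" for k1 k2
    proof -
      have neq: "n - 2 * k1 \<noteq> n - 2 * k2" using that by auto
      have "g k1 r1 \<noteq> g k2 r2" for r1 r2
      proof
        assume "g k1 r1 = g k2 r2"
        hence "length (filter (\<lambda>x. x = 1) (g k1 r1)) = length (filter (\<lambda>x. x = 1) (g k2 r2))" by simp
        thus False using neq unfolding cnt by simp
      qed
      thus ?thesis by blast
    qed
    show "CS n \<inter> E = {}"
    proof -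
      have "replicate (n div 2) 2 \<notin> CS n" if ev: "even n"
      proof
        assume "replicate (n div 2) 2 \<in> CS n"
        moreover have "n div 2 \<noteq> 0" using ev n by auto
        ultimately have S: "sp {2}" unfolding CS_def by simp
        thus False using not_sp2 by blast
      qed
      thus ?thesis unfolding E_def by auto
    qed
    show "finite E" unfolding E_def by simp
    show "CS n \<union> E = (\<Union>k\<in>{..n div 2}. g k ` CS k)"
    proof (intro equalityI subsetI)
      fix p assume "p \<in> CS n \<union> E"
      then consider "p \<in> CS n" | "even n" "p = replicate (n div 2) 2" unfolding E_def by (auto split: if_splits)
      then show "p \<in> (\<Union>k\<in>{..n div 2}. g k ` CS k)"
      proof cases
        case 1
        hence P: "sorted p" "\<forall>x\<in>set p. 0 < x" "sum_list p = n" "pw p" "sp (set p)"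
          unfolding CS_def is_partition_def by auto
        define ps where "ps = filter (\<lambda>x. x \<noteq> 1) p"
        define t where "t = length (filter (\<lambda>x. x = 1) p)"
        define r where "r = map (\<lambda>x. x div 2) ps"
        have ps2: "\<exists>j. 1 \<le> j \<and> x = 2 ^ j" if "x \<in> set ps" for x
        proof -
          from that have x: "x \<in> set p" "x \<noteq> 1" unfolding ps_def by auto
          then obtain j where j: "x = 2^j" using P(4) unfolding pw_def by blast
          with x(2) have "j \<noteq> 0" by auto
          with j show ?thesis by auto
        qed
        have ev: "even x" if "x \<in> set ps" for x
          using ps2[OF that] by (auto simp: even_power)
        have psr: "map ((*) 2) r = ps" unfolding r_def map_map
          by (rule map_idI) (use ev in auto)
        have ones: "filter (\<lambda>x. x = 1) p = replicate t 1"
          unfolding t_def filt_comm by (rule replicate_length_filter[symmetric])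
        have pdec: "p = replicate t 1 @ map ((*) 2) r"
          using split_ones[OF P(1,2)] ones psr ps_def by simp
        define k where "k = sum_list r"
        have "n = t + 2 * k" using P(3) pdec k_def by (simp add: sum_list_const_mult sum_list_replicate)
        hence kn: "k \<le> n div 2" and tn: "t = n - 2 * k" by auto
        have "r \<in> CS k"
        proof -
          have "sorted ps" unfolding ps_def using P(1) by (rule sorted_wrt_filter)
          hence sr: "sorted r" unfolding r_def sorted_map
            by (rule sorted_wrt_mono_rel[rotated]) (simp add: div_le_mono)
          have pr: "\<forall>x\<in>set r. 0 < x"
          proof
            fix y assume "y \<in> set r"
            then obtain x where x: "x \<in> set ps" "y = x div 2" unfolding r_def by auto
            then obtain j where "1 \<le> j" "x = 2^j" using ps2 by blast
            thus "0 < y" using x pdiv by simp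
          qed
          have wr: "pw r" unfolding pw_def
          proof
            fix y assume "y \<in> set r"
            then obtain x where x: "x \<in> set ps" "y = x div 2" unfolding r_def by auto
            then obtain j where "1 \<le> j" "x = 2^j" using ps2 by blast
            thus "\<exists>k. y = 2^k" using x pdiv by auto
          qed
          have "sp (set r)"
          proof -
            from P(5) consider "\<forall>x\<in>set p. x = 1"
              | i where "1 \<le> i" "2^i \<in> set p" "2^(i-1) \<in> set p" "\<forall>x\<in>set p. x \<le> 2^i"
              unfolding sp_def by blast
            then show ?thesis
            proof cases
              case 1
              hence "ps = []" unfolding ps_def by (simp add: filter_empty_conv)
              thus ?thesis unfolding r_def sp_def by simp
            next
              case 2
              show ?thesis
              proof (cases "i = 1")
                case True
                have "\<forall>x\<in>set r. x = 1"
                proof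
                  fix y assume "y \<in> set r"
                  then obtain x where x: "x \<in> set ps" "y = x div 2" unfolding r_def by auto
                  then obtain j where j: "1 \<le> j" "x = 2^j" using ps2 by blast
                  have x2: "x \<le> 2" using 2 True x unfolding ps_def by auto
                  have "j = 1"
                  proof (rule ccontr)
                    assume "j \<noteq> 1"
                    hence "2 \<le> j" using j(1) by simp
                    hence "(2::nat)^2 \<le> 2^j" by (rule power_increasing) simp
                    thus False using x2 j(2) by simp
                  qed
                  thus "y = 1" using x j by simp
                qed
                thus ?thesis unfolding sp_def by simp
              next
                case False
                hence i2: "2 \<le> i" using 2 by simp
                have a: "2^i \<in> set ps" "2^(i-1) \<in> set ps" using 2 i2 unfolding ps_def by auto
                have d1: "(2::nat)^i div 2 = 2^(i-1)" using i2 by (intro pdiv) simp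
                have d2: "(2::nat)^(i-1) div 2 = 2^(i-1-1)" using i2 by (intro pdiv) simp
                have "(2::nat)^i div 2 \<in> (\<lambda>x. x div 2) ` set ps" using a(1) by (rule imageI)
                hence b1a: "2^(i-1) \<in> set r" unfolding r_def set_map d1 .
                have "(2::nat)^(i-1) div 2 \<in> (\<lambda>x. x div 2) ` set ps" using a(2) by (rule imageI)
                hence b1b: "2^(i-1-1) \<in> set r" unfolding r_def set_map d2 .
                have b2: "\<forall>y\<in>set r. y \<le> 2^(i-1)"
                proof
                  fix y assume "y \<in> set r"
                  then obtain x where x: "x \<in> set ps" "y = x div 2" unfolding r_def by auto
                  have "x \<le> 2^i" using 2 x unfolding ps_def by auto
                  hence "x div 2 \<le> 2^i div 2" by (rule div_le_mono)
                  thus "y \<le> 2^(i-1)" using x d1 by simp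
                qed
                have i1: "1 \<le> i - 1" using i2 by simp
                have "\<exists>i'. 1 \<le> i' \<and> 2^i' \<in> set r \<and> 2^(i'-1) \<in> set r \<and> (\<forall>x\<in>set r. x \<le> 2^i')"
                  by (rule exI[of _ "i-1"]) (use i1 b1a b1b b2 in simp)
                thus ?thesis unfolding sp_def by (rule disjI2)
              qed
            qed
          qed
          thus ?thesis unfolding CS_def is_partition_def using sr pr wr k_def by simp
        qed
        thus ?thesis using pdec kn tn unfolding g_def by blast
      next
        case 2
        have "replicate (n div 2) 1 \<in> CS (n div 2)"
          unfolding CS_def is_partition_def pw_def sp_def using exI[of "\<lambda>k. (1::nat) = 2^k" 0] by (auto simp: sum_list_replicate)
        moreover have "p = g (n div 2) (replicate (n div 2) 1)" using 2 unfolding g_def by (simp add: map_replicate)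
        ultimately show ?thesis by blast
      qed
    next
      fix p assume "p \<in> (\<Union>k\<in>{..n div 2}. g k ` CS k)"
      then obtain k r where k: "k \<le> n div 2" and r: "r \<in> CS k" and pr: "p = g k r"
        by auto
      from r have R: "sorted r" "\<forall>x\<in>set r. 0 < x" "sum_list r = k" "pw r" "sp (set r)"
        unfolding CS_def is_partition_def by auto
      have setp: "x \<in> set p \<Longrightarrow> x = 1 \<or> (\<exists>y\<in>set r. x = 2 * y)" for x
        unfolding pr g_def by auto
      have base: "is_partition p n \<and> pw p"
      proof -
        have "sorted (map ((*) 2) r)" unfolding sorted_map
          by (rule sorted_wrt_mono_rel[OF _ R(1)]) simp
        moreover have "\<forall>x\<in>set (replicate (n - 2 * k) (1::nat)). \<forall>y\<in>set (map ((*) 2) r). x \<le> y"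
          using R(2) by auto
        ultimately have "sorted p" unfolding pr g_def by (simp add: sorted_append)
        moreover have "sum_list p = n" using R(3) k unfolding pr g_def
          by (simp add: sum_list_const_mult sum_list_replicate)
        moreover have "\<forall>x\<in>set p. 0 < x" using R(2) setp by fastforce
        moreover have "pw p" unfolding pw_def
        proof
          fix x assume "x \<in> set p"
          then consider "x = 1" | y where "y \<in> set r" "x = 2 * y" using setp by blast
          then show "\<exists>j. x = 2^j"
          proof cases
            case 1 then show ?thesis by (intro exI[of _ 0]) simp
          next
            case 2
            then obtain j where "y = 2^j" using R(4) unfolding pw_def by blast
            with 2 show ?thesis by (intro exI[of _ "Suc j"]) simp
          qed
        qed
        ultimately show ?thesis unfolding is_partition_def by simp
      qed
      from R(5) consider "\<forall>x\<in>set r. x = 1"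
        | i where "1 \<le> i" "2^i \<in> set r" "2^(i-1) \<in> set r" "\<forall>x\<in>set r. x \<le> 2^i"
        unfolding sp_def by blast
      then show "p \<in> CS n \<union> E"
      proof cases
        case 1
        show ?thesis
        proof (cases "r = []")
          case True
          hence "sp (set p)" unfolding pr g_def sp_def by simp
          thus ?thesis using base unfolding CS_def by simp
        next
          case rne: False
          show ?thesis
          proof (cases "n - 2 * k = 0")
            case True
            have rr: "replicate (length r) 1 = r" using 1 by (rule replicate_length_same)
            have lr: "length r = k" using R(3) sum_ones[OF 1] by simp
            have n2: "n = 2 * k" using True k by simp
            have "p = map ((*) 2) r" using True unfolding pr g_def by simp
            also have "\<dots> = map ((*) 2) (replicate k 1)" using rr lr by simp
            also have "\<dots> = replicate (n div 2) 2" using n2 by (simp add: map_replicate)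
            finally have "p = replicate (n div 2) 2" .
            moreover have "even n" using n2 by simp
            ultimately show ?thesis unfolding E_def by simp
          next
            case False
            obtain y where y: "y \<in> set r" using rne by (cases r) auto
            hence "y = 1" using 1 by blast
            hence "2 \<in> set p" using y unfolding pr g_def by force
            moreover have "1 \<in> set p" using False unfolding pr g_def by simp
            moreover have "\<forall>x\<in>set p. x \<le> 2" using 1 setp by fastforce
            ultimately have "sp (set p)" unfolding sp_def by (intro disjI2 exI[of _ 1]) simp
            thus ?thesis using base unfolding CS_def by simp
          qed
        qed
      next
        case 2
        have "2 * 2^i \<in> set (map ((*) 2) r)" using 2 by simp
        hence a1: "2^(i+1) \<in> set p" unfolding pr g_def by simp
        have "2 * 2^(i-1) \<in> set (map ((*) 2) r)" using 2 by simp
        hence a2: "2^(i+1-1) \<in> set p" unfolding pr g_def using pmul[OF 2(1)] by simp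
        have a3: "\<forall>x\<in>set p. x \<le> 2^(i+1)"
        proof
          fix x assume "x \<in> set p"
          then consider "x = 1" | y where "y \<in> set r" "x = 2 * y" using setp by blast
          then show "x \<le> 2^(i+1)"
          proof cases
            case 1 then show ?thesis by simp
          next
            case 3: 2
            then have "y \<le> 2^i" using 2 by blast
            with 3 show ?thesis by simp
          qed
        qed
        have "sp (set p)" unfolding sp_def using a1 a2 a3 by (intro disjI2 exI[of _ "i+1"]) simp
        thus ?thesis using base unfolding CS_def by simp
      qed
    qed
  qed (auto simp: finite_CS)
  thus ?thesis unfolding CS_eq E_def by (simp split: if_splits)
qed

lemma b0: "b 0 = 1"
proof -
  have "{p. is_partition p 0 \<and> distinct p \<and> non_squashing p} = {[]}"
  proof (intro equalityI subsetI)
    fix p assume "p \<in> {p. is_partition p 0 \<and> distinct p \<and> non_squashing p}"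
    hence "sum_list p = 0" "\<forall>x\<in>set p. 0 < x" unfolding is_partition_def by auto
    thus "p \<in> {[]}" by (cases p) auto
  next
    fix p :: "nat list" assume "p \<in> {[]}"
    thus "p \<in> {p. is_partition p 0 \<and> distinct p \<and> non_squashing p}"
      unfolding is_partition_def non_squashing_def by simp
  qed
  thus ?thesis unfolding b_def by simp
qed

lemma c0: "pow2_special_count 0 = 1"
proof -
  have "CS 0 = {[]}"
  proof (intro equalityI subsetI)
    fix p assume "p \<in> CS 0"
    hence "sum_list p = 0" "\<forall>x\<in>set p. 0 < x" unfolding CS_def is_partition_def by auto
    thus "p \<in> {[]}" by (cases p) auto
  next
    fix p :: "nat list" assume "p \<in> {[]}"
    thus "p \<in> CS 0" unfolding CS_def is_partition_def pw_def sp_def by simp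
  qed
  thus ?thesis unfolding CS_eq by simp
qed

theorem mainTheorem4:
  fixes n :: nat
  shows "b n = pow2_special_count n"
proof (induction n rule: less_induct)
  case (less n)
  show ?case
  proof (cases "n = 0")
    case True
    thus ?thesis using b0 c0 by simp
  next
    case False
    hence n: "n \<ge> 1" by simp
    have "b k = pow2_special_count k" if "k \<in> {..n div 2}" for k
    proof -
      have "k < n" using that n by auto
      thus ?thesis by (rule less)
    qed
    hence "(\<Sum>k\<le>n div 2. b k) = (\<Sum>k\<le>n div 2. pow2_special_count k)"
      by (rule sum.cong[OF refl])
    thus ?thesis using b_rec[OF n] c_rec[OF n] by simp
  qed
qed

end
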